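(* Let $\Omega=\{re^{i\theta}:0\le r<R(\theta)\}$ be a starlike planar domain with positive, $2\pi$-periodic, Lipschitz continuous radius function $R$, let $q$ be a positive weight in $L^\infty(\partial\Omega)$, written $q(\theta)=q(R(\theta)e^{i\theta})$, and let $f:\mathbb{D}\to\Omega$ be the stretch map $f(re^{i\theta})=R(\theta)re^{i\theta}$. Then the quantities $g_0,g_1$ associated with $f$ and $q$ (defined below) are $$g_0(\Omega)=1+\frac1{2\pi}\int_0^{2\pi}(\log R)'(\theta)^2\,d\theta,\qquad g_1(\Omega,q)=\frac{\frac1{2\pi}\int_0^{2\pi}\big(R(\theta)^2+R'(\theta)^2\big)q(\theta)^2\,d\theta}{\left(\frac1{2\pi}\int_0^{2\pi}\sqrt{R(\theta)^2+R'(\theta)^2}\,q(\theta)\,d\theta\right)^2},$$ and $g_0\ge1$, $g_1\ge1$. Further, $g_0=1$ if and only if $R$ is constant, i.e. $\Omega$ is a disk centered at the origin.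
   Context: For a quasiconformal $f:\mathbb{D}\to\Omega$ with complex dilatation $\mu=\overline{\partial} f/\partial f$ depending only on $\theta$ (where $\partial=\frac12(\partial_x-i\partial_y)$, $\overline\partial=\frac12(\partial_x+i\partial_y)$), set $a_0=\frac{|e^{2i\theta}-\mu(e^{i\theta})|^2}{1-|\mu(e^{i\theta})|^2}$, $a_1=\frac{|e^{2i\theta}+\mu(e^{i\theta})|^2}{1-|\mu(e^{i\theta})|^2}$, $p(\theta)=q(f(e^{i\theta}))|\partial_\theta f(e^{i\theta})|$, and $g_0=\frac1{2\pi}\int_0^{2\pi}a_0\,d\theta$, $g_1=\frac{\frac1{2\pi}\int_0^{2\pi}a_1p^2\,d\theta}{(\frac1{2\pi}\int_0^{2\pi}p\,d\theta)^2}$. *)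

theory Defs
  imports "HOL-Analysis.Analysis"
begin

text \<open>Stretch map f(r e^{i theta}) = R(theta) r e^{i theta}, written on complex numbers
  (defined by the same formula on all of C, so that it may be evaluated on the unit circle).\<close>
definition stretch_map :: "(real \<Rightarrow> real) \<Rightarrow> complex \<Rightarrow> complex" where
  "stretch_map R z = complex_of_real (R (Arg z)) * z"

definition wirt_d :: "(complex \<Rightarrow> complex) \<Rightarrow> complex \<Rightarrow> complex" where
  "wirt_d f z = (frechet_derivative f (at z) 1 - \<i> * frechet_derivative f (at z) \<i>) / 2"

definition wirt_dbar :: "(complex \<Rightarrow> complex) \<Rightarrow> complex \<Rightarrow> complex" where
  "wirt_dbar f z = (frechet_derivative f (at z) 1 + \<i> * frechet_derivative f (at z) \<i>) / 2"

definition dilatation :: "(complex \<Rightarrow> complex) \<Rightarrow> complex \<Rightarrow> complex" where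
  "dilatation f z = wirt_dbar f z / wirt_d f z"

definition a0 :: "(complex \<Rightarrow> complex) \<Rightarrow> real \<Rightarrow> real" where
  "a0 f \<theta> = (cmod (cis (2 * \<theta>) - dilatation f (cis \<theta>)))\<^sup>2 / (1 - (cmod (dilatation f (cis \<theta>)))\<^sup>2)"

definition a1 :: "(complex \<Rightarrow> complex) \<Rightarrow> real \<Rightarrow> real" where
  "a1 f \<theta> = (cmod (cis (2 * \<theta>) + dilatation f (cis \<theta>)))\<^sup>2 / (1 - (cmod (dilatation f (cis \<theta>)))\<^sup>2)"

definition pw :: "(complex \<Rightarrow> real) \<Rightarrow> (complex \<Rightarrow> complex) \<Rightarrow> real \<Rightarrow> real" where
  "pw q f \<theta> = q (f (cis \<theta>)) * cmod (vector_derivative (\<lambda>t. f (cis t)) (at \<theta>))"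

definition g0 :: "(complex \<Rightarrow> complex) \<Rightarrow> real" where
  "g0 f = integral {0..2*pi} (a0 f) / (2*pi)"

definition g1 :: "(complex \<Rightarrow> real) \<Rightarrow> (complex \<Rightarrow> complex) \<Rightarrow> real" where
  "g1 q f = (integral {0..2*pi} (\<lambda>\<theta>. a1 f \<theta> * (pw q f \<theta>)\<^sup>2) / (2*pi))
            / (integral {0..2*pi} (pw q f) / (2*pi))\<^sup>2"

end

theory Submission
  imports Defs
begin


definition msum :: "real measure \<Rightarrow> real measure \<Rightarrow> real measure" where
  "msum M N = measure_of UNIV (sets borel) (\<lambda>A. emeasure M A + emeasure N A)"

lemma emeasure_msum:
  assumes "sets M = sets borel" "sets N = sets borel" "A \<in> sets borel"
  shows "emeasure (msum M N) A = emeasure M A + emeasure N A"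
  unfolding msum_def
proof (rule emeasure_measure_of_sigma)
  show "sigma_algebra UNIV (sets borel)"
    by (metis sets.sigma_algebra_axioms space_borel)
  show "positive (sets borel) (\<lambda>A. emeasure M A + emeasure N A)"
    by (simp add: positive_def)
  show "countably_additive (sets borel) (\<lambda>A. emeasure M A + emeasure N A)"
    unfolding countably_additive_def
  proof (intro allI impI)
    fix F :: "nat \<Rightarrow> real set"
    assume F: "range F \<subseteq> sets borel" "disjoint_family F" "\<Union> (range F) \<in> sets borel"
    have "(\<Sum>i. emeasure M (F i) + emeasure N (F i)) = (\<Sum>i. emeasure M (F i)) + (\<Sum>i. emeasure N (F i))"
      by (simp add: suminf_add)
    also have "\<dots> = emeasure M (\<Union> (range F)) + emeasure N (\<Union> (range F))"
      using F assms by (simp add: suminf_emeasure)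
    finally show "(\<Sum>i. emeasure M (F i) + emeasure N (F i)) = emeasure M (\<Union> (range F)) + emeasure N (\<Union> (range F))" .
  qed
qed (use assms in auto)

lemma sets_msum[simp]: "sets (msum M N) = sets borel"
  unfolding msum_def by (metis sets.sigma_sets_eq sets_measure_of sets.space_closed space_borel)

lemma msum_interval:
  fixes G H :: "real \<Rightarrow> real" and c :: real
  assumes monoG: "mono G" and monoH: "mono H" and cG: "continuous_on UNIV G" and cH: "continuous_on UNIV H"
    and sum: "\<And>x. G x + H x = c * x" and c: "c \<ge> 0"
  shows "msum (interval_measure G) (interval_measure H) = density lborel (\<lambda>_. ennreal c)"
proof -
  have rcG: "continuous (at_right a) G" for a
    using cG by (meson UNIV_I continuous_on_eq_continuous_within continuous_within_subset top_greatest)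
  have rcH: "continuous (at_right a) H" for a
    using cH by (meson UNIV_I continuous_on_eq_continuous_within continuous_within_subset top_greatest)
  have mG: "\<And>x y. x \<le> y \<Longrightarrow> G x \<le> G y" using monoG by (simp add: mono_def)
  have mH: "\<And>x y. x \<le> y \<Longrightarrow> H x \<le> H y" using monoH by (simp add: mono_def)
  let ?E = "range (\<lambda>(a, b). {a <.. b::real})"
  have eqI: "emeasure (msum (interval_measure G) (interval_measure H)) X = emeasure (density lborel (\<lambda>_. ennreal c)) X"
    if "X \<in> ?E" for X
  proof -
    from that obtain a b where X: "X = {a<..b}" by auto
    have "emeasure (msum (interval_measure G) (interval_measure H)) X
        = emeasure (interval_measure G) X + emeasure (interval_measure H) X"
      by (simp add: X emeasure_msum)
    also have "\<dots> = (if a \<le> b then ennreal (c * (b - a)) else 0)"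
      using sum[of a] sum[of b] mG[of a b] mH[of a b]
      by (auto simp add: X emeasure_interval_measure_Ioc_eq mG mH rcG rcH ennreal_plus[symmetric] algebra_simps
          simp del: ennreal_plus)
    also have "\<dots> = emeasure (density lborel (\<lambda>_. ennreal c)) X"
      using c by (auto simp: X emeasure_density nn_integral_cmult_indicator ennreal_mult)
    finally show ?thesis .
  qed
  show ?thesis
  proof (rule measure_eqI_generator_eq_countable[where E = ?E and \<Omega> = UNIV and A = "(\<lambda>(a, b). {a <.. b::real}) ` (\<rat> \<times> \<rat>)"])
    show "Int_stable ?E"
      by (auto simp: Int_stable_def image_def) (metis Int_greaterThanAtMost)
    show "sets (msum (interval_measure G) (interval_measure H)) = sigma_sets UNIV ?E"
      by (simp add: borel_sigma_sets_Ioc)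
    show "sets (density lborel (\<lambda>_. ennreal c)) = sigma_sets UNIV ?E"
      by (simp add: borel_sigma_sets_Ioc)
    show "\<Union> ((\<lambda>(a, b). {a <.. b::real}) ` (\<rat> \<times> \<rat>)) = UNIV"
      by (auto intro!: Rats_no_top_le Rats_no_bot_less)
    show "countable ((\<lambda>(a, b). {a <.. b::real}) ` (\<rat> \<times> \<rat>))"
      by (intro countable_image countable_SIGMA countable_rat)
    show "emeasure (msum (interval_measure G) (interval_measure H)) a \<noteq> \<infinity>"
      if "a \<in> (\<lambda>(a, b). {a <.. b::real}) ` (\<rat> \<times> \<rat>)" for a
    proof -
      from that obtain x y where a: "a = {x<..y}" by auto
      have "emeasure lborel {x<..y} \<noteq> \<infinity>" by (cases "x \<le> y") auto
      moreover have "a \<in> ?E" using a by auto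
      ultimately show ?thesis
        using eqI[of a] c a by (auto simp: emeasure_density nn_integral_cmult_indicator ennreal_mult_eq_top_iff)
    qed
  qed (use eqI in auto)
qed


lemma mono_rep:
  fixes G H :: "real \<Rightarrow> real" and c :: real
  assumes monoG: "mono G" and monoH: "mono H" and cG: "continuous_on UNIV G" and cH: "continuous_on UNIV H"
    and sum: "\<And>x. G x + H x = c * x" and c: "c \<ge> 0"
  obtains k where "k \<in> borel_measurable borel" "\<And>x. 0 \<le> k x"
    "\<And>a b. a \<le> b \<Longrightarrow> (k has_integral (G b - G a)) {a..b}"
proof -
  have mG: "\<And>x y. x \<le> y \<Longrightarrow> G x \<le> G y" using monoG by (simp add: mono_def)
  let ?\<mu> = "interval_measure G"
  have msum: "msum ?\<mu> (interval_measure H) = density lborel (\<lambda>_. ennreal c)"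
    by (rule msum_interval[OF assms])
  have ac: "absolutely_continuous lborel ?\<mu>"
    unfolding absolutely_continuous_def
  proof
    fix A :: "real set" assume A: "A \<in> null_sets lborel"
    then have Ab: "A \<in> sets borel" by auto
    have "emeasure ?\<mu> A \<le> emeasure ?\<mu> A + emeasure (interval_measure H) A" by simp
    also have "\<dots> = emeasure (msum ?\<mu> (interval_measure H)) A"
      using Ab by (simp add: emeasure_msum)
    also have "\<dots> = 0"
      using A Ab by (simp add: msum emeasure_density nn_integral_cmult_indicator null_setsD1)
    finally show "A \<in> null_sets ?\<mu>" using Ab by (simp add: null_sets_def)
  qed
  obtain h where h: "h \<in> borel_measurable lborel" and dens: "density lborel h = ?\<mu>"
    using sigma_finite_measure.Radon_Nikodym[OF sigma_finite_lborel ac] by auto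
  define k where "k x = enn2real (h x)" for x
  have hb: "h \<in> borel_measurable borel" using h by simp
  show thesis
  proof
    show "k \<in> borel_measurable borel" unfolding k_def using hb by measurable
    show "0 \<le> k x" for x by (simp add: k_def)
    fix a b :: real assume ab: "a \<le> b"
    have "emeasure ?\<mu> {a..b} = ennreal (G b - G a)"
      by (rule emeasure_interval_measure_Icc[OF ab mG cG])
    then have "emeasure (density lborel h) {a..b} = ennreal (G b - G a)"
      by (simp only: dens)
    then have I: "(\<integral>\<^sup>+x. h x * indicator {a..b} x \<partial>lborel) = ennreal (G b - G a)"
      using emeasure_density[OF h, of "{a..b}"] by simp
    then have fin: "(\<integral>\<^sup>+x. h x * indicator {a..b} x \<partial>lborel) \<noteq> \<infinity>" by simp
    have "AE x in lborel. h x * indicator {a..b} x \<noteq> \<infinity>"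
      by (rule nn_integral_PInf_AE[OF _ fin]) (use hb in measurable)
    then have "AE x in lborel. ennreal (k x * indicator {a..b} x) = h x * indicator {a..b} x"
      by eventually_elim (auto simp: k_def indicator_def ennreal_enn2real_if)
    then have "(\<integral>\<^sup>+x. ennreal (k x * indicator {a..b} x) \<partial>lborel) = ennreal (G b - G a)"
      using I by (simp add: nn_integral_cong_AE)
    moreover have "(\<lambda>x. k x * indicator {a..b} x) \<in> borel_measurable borel"
      unfolding k_def using hb by measurable
    moreover have "0 \<le> G b - G a" using mG[OF ab] by simp
    ultimately have "((\<lambda>x. k x * indicator {a..b} x) has_integral (G b - G a)) UNIV"
      by (intro nn_integral_has_integral) (auto simp: k_def)
    then show "(k has_integral (G b - G a)) {a..b}"
    proof (subst has_integral_restrict_UNIV[symmetric])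
      assume "((\<lambda>x. k x * indicator {a..b} x) has_integral (G b - G a)) UNIV"
      moreover have "(\<lambda>x. k x * indicator {a..b} x) = (\<lambda>x. if x \<in> {a..b} then k x else 0)"
        by (auto simp: indicator_def)
      ultimately show "((\<lambda>x. if x \<in> {a..b} then k x else 0) has_integral (G b - G a)) UNIV" by simp
    qed
  qed
qed


lemma indef_deriv:
  fixes k F :: "real \<Rightarrow> real"
  assumes int: "\<And>a b. a \<le> b \<Longrightarrow> (k has_integral (F b - F a)) {a..b}"
  obtains N where "negligible N" "\<And>x. x \<notin> N \<Longrightarrow> (F has_real_derivative k x) (at x)"
proof -
  have ik: "k integrable_on cbox a b" for a b :: real
    using int[of a b] by (cases "a \<le> b") (auto simp: integrable_on_def)
  obtain N1 where N1: "negligible N1"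
    and d1: "\<And>x e. \<lbrakk>x \<notin> N1; 0 < e\<rbrakk> \<Longrightarrow> \<exists>d>0. \<forall>h. 0 < h \<and> h < d \<longrightarrow>
               norm(integral (cbox x (x + h *\<^sub>R One)) k /\<^sub>R h ^ DIM(real) - k x) < e"
    using integrable_ccontinuous_explicit[of k] ik by blast
  have ik2: "(\<lambda>t. k (-t)) integrable_on cbox a b" for a b :: real
  proof -
    have "k integrable_on {-b..-a}" using ik[of "-b" "-a"] by simp
    then show ?thesis using Henstock_Kurzweil_Integration.integrable_reflect_real[where f=k and a="-b" and b="-a"] by simp
  qed
  obtain N2 where N2: "negligible N2"
    and d2: "\<And>x e. \<lbrakk>x \<notin> N2; 0 < e\<rbrakk> \<Longrightarrow> \<exists>d>0. \<forall>h. 0 < h \<and> h < d \<longrightarrow>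
               norm(integral (cbox x (x + h *\<^sub>R One)) (\<lambda>t. k (-t)) /\<^sub>R h ^ DIM(real) - k (-x)) < e"
    using integrable_ccontinuous_explicit[of "\<lambda>t. k (-t)"] ik2 by blast
  have negN2: "negligible (uminus ` N2)"
    by (rule negligible_differentiable_image_negligible[OF _ N2]) (auto intro: differentiable_on_minus)
  show thesis
  proof
    show "negligible (N1 \<union> uminus ` N2)" using N1 negN2 by (rule negligible_Un)
    fix x assume x: "x \<notin> N1 \<union> uminus ` N2"
    then have x1: "x \<notin> N1" and x2: "-x \<notin> N2" by (auto simp: image_iff)
    show "(F has_real_derivative k x) (at x)"
      unfolding DERIV_def LIM_eq
    proof (intro allI impI)
      fix e :: real assume e: "0 < e"
      obtain d1' where d1': "d1' > 0" "\<And>h. 0 < h \<Longrightarrow> h < d1' \<Longrightarrow>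
          \<bar>integral {x..x+h} k / h - k x\<bar> < e"
        using d1[OF x1 e] by (auto simp: divide_inverse_commute)
      obtain d2' where d2': "d2' > 0" "\<And>h. 0 < h \<Longrightarrow> h < d2' \<Longrightarrow>
          \<bar>integral {-x..-x+h} (\<lambda>t. k (-t)) / h - k x\<bar> < e"
        using d2[OF x2 e] by (auto simp: divide_inverse_commute)
      show "\<exists>s>0. \<forall>h. h \<noteq> 0 \<and> norm (h - 0) < s \<longrightarrow> norm ((F (x + h) - F x) / h - k x) < e"
      proof (intro exI[of _ "min d1' d2'"] conjI allI impI)
        show "0 < min d1' d2'" using d1' d2' by simp
        fix h :: real assume h: "h \<noteq> 0 \<and> norm (h - 0) < min d1' d2'"
        show "norm ((F (x + h) - F x) / h - k x) < e"
        proof (cases "h > 0")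
          case True
          have "F (x + h) - F x = integral {x..x+h} k"
            using int[of x "x+h"] True by (simp add: integral_unique)
          then show ?thesis using d1'(2)[of h] True h by simp
        next
          case False
          then have hp: "-h > 0" using h by simp
          have "F x - F (x + h) = integral {x+h..x} k"
            using int[of "x+h" x] hp by (simp add: integral_unique)
          also have "\<dots> = integral {-x..-x+(-h)} (\<lambda>t. k (-t))"
            using Henstock_Kurzweil_Integration.integral_reflect_real[where f=k and a="x+h" and b=x] by simp
          finally have "(F (x + h) - F x) / h = integral {-x..-x+(-h)} (\<lambda>t. k (-t)) / (-h)"
            using hp by (simp add: field_simps)
          then show ?thesis using d2'(2)[of "-h"] hp h by simp
        qed
      qed
    qed
  qed
qed


lemma lipschitz_deriv_bound:
  fixes g :: "real \<Rightarrow> real"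
  assumes lip: "L-lipschitz_on UNIV g" and d: "(g has_real_derivative D) (at x)"
  shows "\<bar>D\<bar> \<le> L"
proof -
  have lim: "((\<lambda>h. \<bar>(g (x + h) - g x) / h\<bar>) \<longlongrightarrow> \<bar>D\<bar>) (at 0)"
    using d unfolding DERIV_def by (intro tendsto_rabs)
  have "eventually (\<lambda>h. \<bar>(g (x + h) - g x) / h\<bar> \<le> L) (at (0::real))"
    unfolding eventually_at
  proof (intro exI[of _ 1] conjI ballI impI, simp)
    fix h :: real assume "h \<in> UNIV" "h \<noteq> 0 \<and> dist h 0 < 1"
    then have "h \<noteq> 0" by simp
    have "dist (g (x + h)) (g x) \<le> L * dist (x + h) x"
      using lip by (rule lipschitz_onD) auto
    then have "\<bar>g (x + h) - g x\<bar> \<le> L * \<bar>h\<bar>" by (simp add: dist_real_def)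
    then show "\<bar>(g (x + h) - g x) / h\<bar> \<le> L" using \<open>h \<noteq> 0\<close>
      by (simp add: abs_divide divide_le_eq)
  qed
  then show ?thesis by (rule tendsto_upperbound[OF lim]) simp
qed

lemma lipschitz_rep:
  fixes g :: "real \<Rightarrow> real"
  assumes lip: "L-lipschitz_on UNIV g"
  obtains N k where "negligible N" "\<And>x. x \<notin> N \<Longrightarrow> (g has_real_derivative k x) (at x)"
    "k \<in> borel_measurable borel" "\<And>x. \<bar>k x\<bar> \<le> L"
    "\<And>a b. a \<le> b \<Longrightarrow> (k has_integral (g b - g a)) {a..b}"
proof -
  have L: "0 \<le> L" using lip by (rule lipschitz_on_nonneg)
  have lipd: "\<bar>g y - g x\<bar> \<le> L * \<bar>y - x\<bar>" for x y
    using lipschitz_onD[OF lip, of y x] by (simp add: dist_real_def)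
  define G where "G x = g x + L * x" for x
  define H where "H x = L * x - g x" for x
  have cg: "continuous_on UNIV g" using lip by (rule lipschitz_on_continuous_on)
  have mG: "mono G" unfolding mono_def G_def
  proof (intro allI impI)
    fix x y :: real assume "x \<le> y" then show "g x + L * x \<le> g y + L * y"
      using lipd[of x y] by (simp add: abs_le_iff algebra_simps)
  qed
  have mH: "mono H" unfolding mono_def H_def
  proof (intro allI impI)
    fix x y :: real assume "x \<le> y" then show "L * x - g x \<le> L * y - g y"
      using lipd[of x y] by (simp add: abs_le_iff algebra_simps)
  qed
  have cG: "continuous_on UNIV G" unfolding G_def by (intro continuous_intros cg)
  have cH: "continuous_on UNIV H" unfolding H_def by (intro continuous_intros cg)
  have sum: "G x + H x = (2 * L) * x" for x by (simp add: G_def H_def)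
  obtain k0 where k0: "k0 \<in> borel_measurable borel" "\<And>x. 0 \<le> k0 x"
    "\<And>a b. a \<le> b \<Longrightarrow> (k0 has_integral (G b - G a)) {a..b}"
    using mono_rep[OF mG mH cG cH sum] L by auto
  obtain N where N: "negligible N" "\<And>x. x \<notin> N \<Longrightarrow> (G has_real_derivative k0 x) (at x)"
    using indef_deriv[of k0 G] k0(3) by blast
  define k where "k x = max (-L) (min L (k0 x - L))" for x
  have gd: "(g has_real_derivative k x) (at x)" if x: "x \<notin> N" for x
  proof -
    have "((\<lambda>x. G x - L * x) has_real_derivative (k0 x - L)) (at x)"
      using N(2)[OF x] by (auto intro!: derivative_eq_intros)
    moreover have "(\<lambda>x. G x - L * x) = g" by (auto simp: G_def)
    ultimately have d: "(g has_real_derivative (k0 x - L)) (at x)" by simp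
    then have "\<bar>k0 x - L\<bar> \<le> L" by (rule lipschitz_deriv_bound[OF lip])
    then have "k x = k0 x - L" by (auto simp: k_def)
    with d show ?thesis by simp
  qed
  show thesis
  proof
    show "negligible N" by (rule N(1))
    show "(g has_real_derivative k x) (at x)" if "x \<notin> N" for x using gd that .
    show "k \<in> borel_measurable borel" unfolding k_def using k0(1) by measurable
    show "\<bar>k x\<bar> \<le> L" for x using L by (auto simp: k_def)
    fix a b :: real assume ab: "a \<le> b"
    have "((\<lambda>x. k0 x - L) has_integral ((G b - G a) - L * (b - a))) {a..b}"
      using has_integral_diff[OF k0(3)[OF ab] has_integral_const_real[of L a b]] ab by (simp add: mult.commute)
    then have i: "((\<lambda>x. k0 x - L) has_integral (g b - g a)) {a..b}"
      by (simp add: G_def algebra_simps)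
    show "(k has_integral (g b - g a)) {a..b}"
    proof (rule has_integral_spike[OF N(1) _ i])
      fix x assume "x \<in> {a..b} - N"
      then have "x \<notin> N" by simp
      from gd[OF this] have "\<bar>k x\<bar> \<le> L" "(g has_real_derivative k x) (at x)" using L by (auto simp: k_def)
      have d: "(g has_real_derivative (k0 x - L)) (at x)"
      proof -
        have "((\<lambda>x. G x - L * x) has_real_derivative (k0 x - L)) (at x)"
          using N(2)[OF \<open>x \<notin> N\<close>] by (auto intro!: derivative_eq_intros)
        moreover have "(\<lambda>x. G x - L * x) = g" by (auto simp: G_def)
        ultimately show ?thesis by simp
      qed
      show "k x = k0 x - L"
        using DERIV_unique[OF gd[OF \<open>x \<notin> N\<close>] d] .
    qed
  qed
qed



lemma periodic_int:
  fixes R :: "real \<Rightarrow> real"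
  assumes per: "\<forall>x. R (x + 2*pi) = R x"
  shows "R (x + 2*pi * of_int n) = R x"
proof -
  have nat: "R (y + 2*pi*real m) = R y" for y m
  proof (induction m arbitrary: y)
    case 0 then show ?case by simp
  next
    case (Suc m)
    have "R (y + 2*pi*real (Suc m)) = R ((y + 2*pi*real m) + 2*pi)" by (simp add: algebra_simps)
    also have "\<dots> = R y" using per Suc by simp
    finally show ?case .
  qed
  show ?thesis
  proof (cases "n \<ge> 0")
    case True
    then obtain m where "n = int m" by (metis nonneg_int_cases)
    then show ?thesis using nat[of x m] by simp
  next
    case False
    then obtain m where m: "n = - int m" by (metis nonpos_int_cases linear)
    have "R x = R ((x - 2*pi*real m) + 2*pi*real m)" by simp
    also have "\<dots> = R (x - 2*pi*real m)" by (rule nat)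
    finally show ?thesis using m by simp
  qed
qed

lemma Arg_cis_shift:
  obtains n :: int where "Arg (cis t) = t + 2*pi * of_int n"
proof -
  have "cis (Arg (cis t)) = cis t" using cis_Arg[of "cis t"] by (simp add: sgn_eq)
  then have "sin (Arg (cis t)) = sin t \<and> cos (Arg (cis t)) = cos t"
    by (metis cis.sel(1) cis.sel(2))
  then obtain n :: int where "Arg (cis t) = t + 2*pi*n" using sin_cos_eq_iff by blast
  then show thesis using that by blast
qed

lemma stretch_on_circle:
  assumes per: "\<forall>x. R (x + 2*pi) = R x"
  shows "stretch_map R (cis t) = complex_of_real (R t) * cis t"
proof -
  obtain n :: int where n: "Arg (cis t) = t + 2*pi * of_int n" by (rule Arg_cis_shift)
  show ?thesis unfolding stretch_map_def n periodic_int[OF per] ..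
qed

lemma stretch_has_derivative:
  fixes R :: "real \<Rightarrow> real"
  assumes per: "\<forall>x. R (x + 2*pi) = R x"
    and dR: "(R has_real_derivative D) (at \<theta>)"
    and nz: "cis \<theta> \<notin> \<real>\<^sub>\<le>\<^sub>0"
  shows "(stretch_map R has_derivative
           (\<lambda>h. complex_of_real (D * Im (h * inverse (cis \<theta>))) * cis \<theta> + complex_of_real (R \<theta>) * h)) (at (cis \<theta>))"
proof -
  define z0 where "z0 = cis \<theta>"
  obtain n :: int where n: "Arg z0 = \<theta> + 2*pi * of_int n" unfolding z0_def by (rule Arg_cis_shift)
  define a where "a = Arg z0"
  have Ra: "R a = R \<theta>" unfolding a_def n by (rule periodic_int[OF per])
  have Rshift: "R x = R (x + (\<theta> - a))" for x
  proof -
    have "R (x + (\<theta> - a)) = R (x + 2*pi * of_int (-n))" unfolding a_def n by simp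
    also have "\<dots> = R x" by (rule periodic_int[OF per])
    finally show ?thesis by simp
  qed
  have dRa: "(R has_real_derivative D) (at a)"
  proof -
    have "((\<lambda>x. R (x + (\<theta> - a))) has_real_derivative D * 1) (at a)"
      by (rule DERIV_chain2[of R]) (use dR in \<open>auto intro!: derivative_eq_intros\<close>)
    moreover have "(\<lambda>x. R (x + (\<theta> - a))) = R" using Rshift by (auto simp: fun_eq_iff)
    ultimately show ?thesis by simp
  qed
  have z0nz: "z0 \<noteq> 0" by (simp add: z0_def)
  have dLn: "((\<lambda>z. Im (Ln z)) has_derivative (\<lambda>h. Im (h * inverse z0))) (at z0)"
    using has_field_derivative_Ln[OF nz[folded z0_def]]
    by (auto intro!: derivative_eq_intros simp: has_field_derivative_def mult.commute)
  have dArg: "(Arg has_derivative (\<lambda>h. Im (h * inverse z0))) (at z0)"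
    by (rule has_derivative_transform_within_open[OF dLn, of "-{0}"]) (auto simp: z0nz Arg_eq_Im_Ln)
  have dRArg: "((\<lambda>z. R (Arg z)) has_derivative (\<lambda>h. D * Im (h * inverse z0))) (at z0)"
  proof -
    have "(R has_derivative (\<lambda>x. x * D)) (at (Arg z0))"
      using dRa unfolding a_def has_field_derivative_def by (simp add: mult.commute[of _ D])
    from has_derivative_compose[OF dArg this] show ?thesis by (simp add: mult.commute)
  qed
  have "((\<lambda>z. complex_of_real (R (Arg z)) * z) has_derivative
        (\<lambda>h. complex_of_real (D * Im (h * inverse z0)) * z0 + complex_of_real (R (Arg z0)) * h)) (at z0)"
    using dRArg by (auto intro!: derivative_eq_intros)
  then show ?thesis unfolding stretch_map_def[abs_def] z0_def[symmetric] a_def[symmetric] Ra .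
qed


lemma cmod_sq: "(cmod z)\<^sup>2 = (Re z)\<^sup>2 + (Im z)\<^sup>2"
  by (simp add: cmod_power2)

lemma a0_alg:
  fixes r D \<phi> :: real
  assumes r: "r > 0"
  defines "w \<equiv> Complex r (-D/2)"
  defines "mu \<equiv> \<i> * complex_of_real (D/2) * cis \<phi> / w"
  shows "(cmod (cis \<phi> - mu))\<^sup>2 / (1 - (cmod mu)\<^sup>2) = 1 + (D / r)\<^sup>2"
    and "(cmod (cis \<phi> + mu))\<^sup>2 / (1 - (cmod mu)\<^sup>2) = 1"
proof -
  have wnz: "w \<noteq> 0" using r by (simp add: w_def complex_eq_iff)
  have nw: "(cmod w)\<^sup>2 = r\<^sup>2 + D\<^sup>2/4" by (simp add: w_def cmod_sq power_divide)
  have nwp: "(cmod w)\<^sup>2 > 0" using wnz by simp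
  have c1: "Complex r (-D) = w - \<i> * complex_of_real (D/2)" by (simp add: w_def complex_eq_iff)
  have c2: "complex_of_real r = w + \<i> * complex_of_real (D/2)" by (simp add: w_def complex_eq_iff)
  have e1: "cis \<phi> - mu = cis \<phi> * (Complex r (-D) / w)"
    unfolding c1 mu_def using wnz by (simp add: field_simps)
  have e2: "cis \<phi> + mu = cis \<phi> * (complex_of_real r / w)"
    unfolding c2 mu_def using wnz by (simp add: field_simps)
  have m: "(cmod mu)\<^sup>2 = (D\<^sup>2/4) / (cmod w)\<^sup>2"
    by (simp add: mu_def norm_mult norm_divide power_divide power_mult_distrib)
  have den: "1 - (cmod mu)\<^sup>2 = r\<^sup>2 / (cmod w)\<^sup>2"
    using nwp unfolding m nw by (simp add: field_simps)
  have n1: "(cmod (cis \<phi> - mu))\<^sup>2 = (r\<^sup>2 + D\<^sup>2) / (cmod w)\<^sup>2"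
    unfolding e1 by (simp add: norm_mult norm_divide power_divide cmod_sq)
  have n2: "(cmod (cis \<phi> + mu))\<^sup>2 = r\<^sup>2 / (cmod w)\<^sup>2"
    unfolding e2 by (simp add: norm_mult norm_divide power_divide)
  show "(cmod (cis \<phi> - mu))\<^sup>2 / (1 - (cmod mu)\<^sup>2) = 1 + (D / r)\<^sup>2"
  proof -
    have "(r\<^sup>2 + D\<^sup>2) / (cmod w)\<^sup>2 / (r\<^sup>2 / (cmod w)\<^sup>2) = (r\<^sup>2 + D\<^sup>2) / r\<^sup>2"
      using nwp by simp
    also have "\<dots> = 1 + (D / r)\<^sup>2" using r by (simp add: add_divide_distrib power_divide)
    finally show ?thesis unfolding n1 den .
  qed
  show "(cmod (cis \<phi> + mu))\<^sup>2 / (1 - (cmod mu)\<^sup>2) = 1"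
    unfolding n2 den using nwp r by simp
qed


lemma stretch_a0a1:
  fixes R :: "real \<Rightarrow> real"
  assumes per: "\<forall>x. R (x + 2*pi) = R x"
    and dR: "(R has_real_derivative D) (at \<theta>)"
    and nz: "cis \<theta> \<notin> \<real>\<^sub>\<le>\<^sub>0"
    and Rpos: "R \<theta> > 0"
  shows "a0 (stretch_map R) \<theta> = 1 + (D / R \<theta>)\<^sup>2" and "a1 (stretch_map R) \<theta> = 1"
proof -
  let ?F = "\<lambda>h. complex_of_real (D * Im (h * inverse (cis \<theta>))) * cis \<theta> + complex_of_real (R \<theta>) * h"
  have F: "frechet_derivative (stretch_map R) (at (cis \<theta>)) = ?F"
    using frechet_derivative_at[OF stretch_has_derivative[OF per dR nz]] by simp
  have wd: "wirt_d (stretch_map R) (cis \<theta>) = Complex (R \<theta>) (-D/2)"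
    unfolding wirt_d_def F
    by (simp add: complex_eq_iff algebra_simps) (simp add: power2_eq_square[symmetric] algebra_simps,
        metis sin_cos_squared_add2 distrib_left mult.right_neutral)
  have wdb: "wirt_dbar (stretch_map R) (cis \<theta>) = \<i> * complex_of_real (D/2) * cis (2*\<theta>)"
    unfolding wirt_dbar_def F
    by (simp add: complex_eq_iff sin_double cos_double) (simp add: algebra_simps power2_eq_square)
  have mu: "dilatation (stretch_map R) (cis \<theta>) = \<i> * complex_of_real (D/2) * cis (2*\<theta>) / Complex (R \<theta>) (-D/2)"
    unfolding dilatation_def wd wdb ..
  show "a0 (stretch_map R) \<theta> = 1 + (D / R \<theta>)\<^sup>2"
    unfolding a0_def mu by (rule a0_alg(1)[OF Rpos, where D=D and \<phi>="2*\<theta>"])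
  show "a1 (stretch_map R) \<theta> = 1"
    unfolding a1_def mu by (rule a0_alg(2)[OF Rpos, where D=D and \<phi>="2*\<theta>"])
qed


lemma pw_stretch:
  fixes R :: "real \<Rightarrow> real"
  assumes per: "\<forall>x. R (x + 2*pi) = R x"
    and dR: "(R has_real_derivative D) (at \<theta>)"
  shows "pw q (stretch_map R) \<theta> = q (complex_of_real (R \<theta>) * cis \<theta>) * sqrt ((R \<theta>)\<^sup>2 + D\<^sup>2)"
proof -
  have e: "(\<lambda>t. stretch_map R (cis t)) = (\<lambda>t. complex_of_real (R t) * cis t)"
    using stretch_on_circle[OF per] by auto
  have dR': "(R has_derivative (\<lambda>x. x * D)) (at \<theta>)"
    using dR unfolding has_field_derivative_def by (simp add: mult.commute[of _ D])
  have "((\<lambda>t. complex_of_real (R t) * cis t) has_vector_derivative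
          (complex_of_real D * cis \<theta> + complex_of_real (R \<theta>) * (\<i> * cis \<theta>))) (at \<theta>)"
    unfolding has_vector_derivative_def
    by (rule has_derivative_eq_rhs, (rule derivative_intros dR')+)
       (auto simp: fun_eq_iff algebra_simps scaleR_conv_of_real)
  then have vd: "vector_derivative (\<lambda>t. stretch_map R (cis t)) (at \<theta>) =
          complex_of_real D * cis \<theta> + complex_of_real (R \<theta>) * (\<i> * cis \<theta>)"
    unfolding e by (rule vector_derivative_at)
  have "complex_of_real D * cis \<theta> + complex_of_real (R \<theta>) * (\<i> * cis \<theta>) = cis \<theta> * Complex D (R \<theta>)"
    by (simp add: complex_eq_iff)
  then have "cmod (vector_derivative (\<lambda>t. stretch_map R (cis t)) (at \<theta>)) = sqrt ((R \<theta>)\<^sup>2 + D\<^sup>2)"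
    unfolding vd by (simp add: norm_mult complex_norm add.commute)
  then show ?thesis unfolding pw_def stretch_on_circle[OF per] by simp
qed



lemma integral_zero_ae:
  fixes f :: "real \<Rightarrow> real"
  assumes f: "f integrable_on {a..b}"
    and nn: "\<And>x. x \<in> {a..b} \<Longrightarrow> 0 \<le> f x" and z: "integral {a..b} f = 0"
  obtains N' where "negligible N'" "\<And>x. x \<in> {a..b} - N' \<Longrightarrow> f x = 0"
proof -
  have ai: "f absolutely_integrable_on {a..b}" by (rule nonnegative_absolutely_integrable_1[OF f nn])
  have li: "integrable (lebesgue_on {a..b}) f" by (rule absolutely_integrable_imp_integrable[OF ai]) simp
  have "integral\<^sup>L (lebesgue_on {a..b}) f = integral {a..b} f"
    using has_integral_integral_lebesgue_on[OF li] by (simp add: integral_unique)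
  with z have zL: "integral\<^sup>L (lebesgue_on {a..b}) f = 0" by simp
  have "AE x in lebesgue_on {a..b}. 0 \<le> f x"
    by (rule AE_I2) (use nn in simp)
  with zL have "AE x in lebesgue_on {a..b}. f x = 0"
    using integral_nonneg_eq_0_iff_AE[OF li] by simp
  then obtain N' where N': "{x \<in> space (lebesgue_on {a..b}). \<not> f x = 0} \<subseteq> N'"
    "emeasure (lebesgue_on {a..b}) N' = 0" "N' \<in> sets (lebesgue_on {a..b})"
    by (rule AE_E)
  then have "N' \<in> null_sets (lebesgue_on {a..b})" by (simp add: null_sets_def)
  then have "N' \<in> null_sets lebesgue" by (simp add: null_sets_restrict_space)
  then have nN': "negligible N'" by (simp add: negligible_iff_null_sets)
  show thesis
  proof (rule that[OF nN'])
    fix x assume "x \<in> {a..b} - N'"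
    then show "f x = 0" using N'(1) by auto
  qed
qed

lemma integral_pos_ae:
  fixes f :: "real \<Rightarrow> real"
  assumes f: "f integrable_on {a..b}" and ab: "a < b" and N: "negligible N"
    and nn: "\<And>x. x \<in> {a..b} \<Longrightarrow> 0 \<le> f x" and pos: "\<And>x. x \<in> {a..b} - N \<Longrightarrow> 0 < f x"
  shows "integral {a..b} f > 0"
proof (rule ccontr)
  assume "\<not> ?thesis"
  with integral_nonneg[OF f nn] have z: "integral {a..b} f = 0" by simp
  obtain N' where nN': "negligible N'" and N': "\<And>x. x \<in> {a..b} - N' \<Longrightarrow> f x = 0"
    using integral_zero_ae[OF f nn z] by blast
  have "{a..b} \<subseteq> N' \<union> N"
  proof
    fix x assume x: "x \<in> {a..b}"
    show "x \<in> N' \<union> N"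
    proof (rule ccontr)
      assume "x \<notin> N' \<union> N"
      then show False using pos[of x] N'[of x] x by auto
    qed
  qed
  then have "negligible {a..b}" using negligible_subset negligible_Un[OF nN' N] by blast
  then show False using ab negligible_interval(1)[of a b] by simp
qed

lemma borel_lebesgue_on: "f \<in> borel_measurable borel \<Longrightarrow> f \<in> borel_measurable (lebesgue_on S)"
  by (intro measurable_restrict_space1 measurable_completion) (simp add: measurable_lborel1)

lemma lebesgue_lebesgue_on: "f \<in> borel_measurable lebesgue \<Longrightarrow> f \<in> borel_measurable (lebesgue_on S)"
  by (intro measurable_restrict_space1)

lemma cauchy_schwarz_int:
  fixes P :: "real \<Rightarrow> real"
  assumes P: "P integrable_on {a..b}" and P2: "(\<lambda>x. (P x)\<^sup>2) integrable_on {a..b}" and ab: "a < b"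
  shows "(integral {a..b} P)\<^sup>2 \<le> (b - a) * integral {a..b} (\<lambda>x. (P x)\<^sup>2)"
proof -
  define I1 where "I1 = integral {a..b} P"
  define I2 where "I2 = integral {a..b} (\<lambda>x. (P x)\<^sup>2)"
  define m where "m = I1 / (b - a)"
  have h1: "(P has_integral I1) {a..b}" using P unfolding I1_def by (rule integrable_integral)
  have h2: "((\<lambda>x. (P x)\<^sup>2) has_integral I2) {a..b}" using P2 unfolding I2_def by (rule integrable_integral)
  have hc: "((\<lambda>x. m\<^sup>2) has_integral m\<^sup>2 * (b - a)) {a..b}"
    using has_integral_const_real[of "m\<^sup>2" a b] ab by (simp add: mult.commute)
  have "((\<lambda>x. (P x)\<^sup>2 - (2*m) * P x + m\<^sup>2) has_integral (I2 - (2*m) * I1 + m\<^sup>2 * (b - a))) {a..b}"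
    by (intro has_integral_add has_integral_diff has_integral_mult_right h1 h2 hc)
  moreover have "(\<lambda>x. (P x)\<^sup>2 - (2*m) * P x + m\<^sup>2) = (\<lambda>x. (P x - m)\<^sup>2)"
    by (auto simp: power2_eq_square algebra_simps)
  ultimately have "((\<lambda>x. (P x - m)\<^sup>2) has_integral (I2 - (2*m) * I1 + m\<^sup>2 * (b - a))) {a..b}" by simp
  then have "0 \<le> I2 - (2*m) * I1 + m\<^sup>2 * (b - a)"
    by (rule has_integral_nonneg) simp
  also have "I2 - (2*m) * I1 + m\<^sup>2 * (b - a) = I2 - I1\<^sup>2 / (b - a)"
  proof -
    define d where "d = b - a"
    have d: "d > 0" using ab by (simp add: d_def)
    have "I2 - (2*(I1/d)) * I1 + (I1/d)\<^sup>2 * d = I2 - I1\<^sup>2 / d"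
      using d by (simp add: power2_eq_square field_simps)
    then show ?thesis by (simp add: m_def d_def)
  qed
  finally have "I1\<^sup>2 / (b - a) \<le> I2" by simp
  then show ?thesis using ab unfolding I1_def[symmetric] I2_def[symmetric] by (simp add: field_simps)
qed

lemma cis_not_nonpos:
  assumes "\<theta> \<in> {0..2*pi}" "\<theta> \<noteq> pi"
  shows "cis \<theta> \<notin> \<real>\<^sub>\<le>\<^sub>0"
proof
  assume "cis \<theta> \<in> \<real>\<^sub>\<le>\<^sub>0"
  then have s: "sin \<theta> = 0" and c: "cos \<theta> \<le> 0" by (auto simp: complex_nonpos_Reals_iff)
  from s obtain n :: int where n: "\<theta> = of_int n * pi" by (auto simp: sin_zero_iff_int2)
  have "0 \<le> of_int n * pi" "of_int n * pi \<le> 2 * pi" using assms(1) n by auto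
  then have "0 \<le> n" "n \<le> 2" using pi_gt_zero by (auto simp: zero_le_mult_iff mult_le_cancel_right)
  then have "n = 0 \<or> n = 1 \<or> n = 2" by auto
  then show False using n c assms(2) by auto
qed

lemma reduce_2pi:
  fixes x :: real
  obtains n :: int where "x + 2*pi * of_int n \<in> {0..2*pi}"
proof -
  define n where "n = - \<lfloor>x / (2*pi)\<rfloor>"
  define fl where "fl = real_of_int \<lfloor>x / (2*pi)\<rfloor>"
  have h1: "fl \<le> x / (2*pi)" "x / (2*pi) < fl + 1"
    unfolding fl_def by linarith+
  have p: "0 < 2*pi" using pi_gt_zero by simp
  have "fl * (2*pi) \<le> x" using pos_le_divide_eq[OF p, of fl x] h1(1) by simp
  moreover have "x < (fl + 1) * (2*pi)" using pos_divide_less_eq[OF p, of x "fl+1"] h1(2) by simp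
  ultimately have "2*pi * of_int \<lfloor>x / (2*pi)\<rfloor> \<le> x" "x < 2*pi * (of_int \<lfloor>x / (2*pi)\<rfloor> + 1)"
    unfolding fl_def by (simp_all add: mult.commute)
  then have "x + 2*pi * of_int n \<in> {0..2*pi}" by (auto simp: n_def algebra_simps)
  then show thesis by (rule that)
qed



theorem lemma1p5:
  fixes R :: "real \<Rightarrow> real" and q :: "complex \<Rightarrow> real"
  assumes R_pos: "\<forall>\<theta>. R \<theta> > 0"
    and R_periodic: "\<forall>\<theta>. R (\<theta> + 2*pi) = R \<theta>"
    and R_lipschitz: "\<exists>L. L-lipschitz_on UNIV R"
    and q_meas: "(\<lambda>\<theta>. q (complex_of_real (R \<theta>) * cis \<theta>)) \<in> borel_measurable lebesgue"
    and q_bounded: "\<exists>B. AE \<theta> in lebesgue. q (complex_of_real (R \<theta>) * cis \<theta>) \<le> B"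
    and q_pos: "AE \<theta> in lebesgue. q (complex_of_real (R \<theta>) * cis \<theta>) > 0"
  shows "g0 (stretch_map R) = 1 + integral {0..2*pi} (\<lambda>\<theta>. (deriv (\<lambda>t. ln (R t)) \<theta>)\<^sup>2) / (2*pi) \<and>
         g1 q (stretch_map R) =
           (integral {0..2*pi} (\<lambda>\<theta>. ((R \<theta>)\<^sup>2 + (deriv R \<theta>)\<^sup>2) * (q (complex_of_real (R \<theta>) * cis \<theta>))\<^sup>2) / (2*pi))
         / (integral {0..2*pi} (\<lambda>\<theta>. sqrt ((R \<theta>)\<^sup>2 + (deriv R \<theta>)\<^sup>2) * q (complex_of_real (R \<theta>) * cis \<theta>)) / (2*pi))\<^sup>2 \<and>
         g0 (stretch_map R) \<ge> 1 \<and>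
         g1 q (stretch_map R) \<ge> 1 \<and>
         (g0 (stretch_map R) = 1 \<longleftrightarrow> (\<exists>c. \<forall>\<theta>. R \<theta> = c))"
proof -
  obtain L where lip: "L-lipschitz_on UNIV R" using R_lipschitz by blast
  have per: "\<forall>x. R (x + 2*pi) = R x" using R_periodic .
  have L0: "0 \<le> L" by (rule lipschitz_on_nonneg[OF lip])
  have contR: "continuous_on UNIV R" by (rule lipschitz_on_continuous_on[OF lip])
  have Rb: "R \<in> borel_measurable borel" by (rule borel_measurable_continuous_onI[OF contR])
  obtain N1 kR where N1: "negligible N1" and dR: "\<And>x. x \<notin> N1 \<Longrightarrow> (R has_real_derivative kR x) (at x)"
    and kRm: "kR \<in> borel_measurable borel" and kRb: "\<And>x. \<bar>kR x\<bar> \<le> L"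
    and kRi: "\<And>a b. a \<le> b \<Longrightarrow> (kR has_integral (R b - R a)) {a..b}"
    by (rule lipschitz_rep[OF lip]) blast
  have cpt: "compact {0..2*pi}" by simp
  have ne: "{0..2*pi} \<noteq> {}" using pi_gt_zero by simp
  have contR': "continuous_on {0..2*pi} R" using contR by (rule continuous_on_subset) simp
  obtain xm where xm: "xm \<in> {0..2*pi}" "\<And>y. y \<in> {0..2*pi} \<Longrightarrow> R xm \<le> R y"
    using continuous_attains_inf[OF cpt ne contR'] by blast
  obtain xM where xM: "xM \<in> {0..2*pi}" "\<And>y. y \<in> {0..2*pi} \<Longrightarrow> R y \<le> R xM"
    using continuous_attains_sup[OF cpt ne contR'] by blast
  define mm where "mm = R xm"
  define MM where "MM = R xM"
  have mm: "mm > 0" using R_pos by (simp add: mm_def)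
  define Q where "Q \<theta> = q (complex_of_real (R \<theta>) * cis \<theta>)" for \<theta>
  define B where "B = N1 \<union> {pi}"
  have negB: "negligible B" unfolding B_def using N1 by (intro negligible_Un) auto
  have nzB: "cis \<theta> \<notin> \<real>\<^sub>\<le>\<^sub>0" and nN1: "\<theta> \<notin> N1" if "\<theta> \<in> {0..2*pi} - B" for \<theta>
    using that cis_not_nonpos[of \<theta>] by (auto simp: B_def)
  have derivR: "deriv R \<theta> = kR \<theta>" if "\<theta> \<notin> N1" for \<theta>
    by (rule DERIV_imp_deriv[OF dR[OF that]])
  have derivln: "deriv (\<lambda>t. ln (R t)) \<theta> = kR \<theta> / R \<theta>" if "\<theta> \<notin> N1" for \<theta>
  proof -
    have "((\<lambda>t. ln (R t)) has_real_derivative (1 / R \<theta>) * kR \<theta>) (at \<theta>)"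
      by (rule DERIV_chain2[OF DERIV_ln_divide dR[OF that]]) (use R_pos in auto)
    then show ?thesis by (simp add: DERIV_imp_deriv)
  qed
  have a0eq: "a0 (stretch_map R) \<theta> = 1 + (deriv (\<lambda>t. ln (R t)) \<theta>)\<^sup>2" if "\<theta> \<in> {0..2*pi} - B" for \<theta>
    using stretch_a0a1(1)[OF per dR[OF nN1[OF that]] nzB[OF that]] R_pos derivln[OF nN1[OF that]] by simp
  have a1eq: "a1 (stretch_map R) \<theta> = 1" if "\<theta> \<in> {0..2*pi} - B" for \<theta>
    using stretch_a0a1(2)[OF per dR[OF nN1[OF that]] nzB[OF that]] R_pos by simp
  have pweq: "pw q (stretch_map R) \<theta> = Q \<theta> * sqrt ((R \<theta>)\<^sup>2 + (deriv R \<theta>)\<^sup>2)" if "\<theta> \<notin> N1" for \<theta>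
    using pw_stretch[OF per dR[OF that], of q] derivR[OF that] by (simp add: Q_def)
  define F where "F \<theta> = (deriv (\<lambda>t. ln (R t)) \<theta>)\<^sup>2" for \<theta>
  define F0 where "F0 \<theta> = (kR \<theta> / R \<theta>)\<^sup>2" for \<theta>
  have F0m: "F0 \<in> borel_measurable (lebesgue_on {0..2*pi})"
  proof -
    have "F0 \<in> borel_measurable borel" unfolding F0_def using kRm Rb by measurable
    then show ?thesis by (rule borel_lebesgue_on)
  qed
  have F0b: "norm (F0 \<theta>) \<le> (L / mm)\<^sup>2" if "\<theta> \<in> {0..2*pi}" for \<theta>
  proof -
    have Rt: "mm \<le> R \<theta>" using xm(2)[OF that] by (simp add: mm_def)
    have "\<bar>R \<theta>\<bar> = R \<theta>" using R_pos[rule_format, of \<theta>] by simp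
    then have "\<bar>kR \<theta> / R \<theta>\<bar> = \<bar>kR \<theta>\<bar> / R \<theta>" by (simp add: abs_divide)
    also have "\<dots> \<le> L / mm" using kRb[of \<theta>] Rt mm L0 by (intro frac_le) auto
    finally have "\<bar>kR \<theta> / R \<theta>\<bar> \<le> L / mm" .
    then have "\<bar>kR \<theta> / R \<theta>\<bar>\<^sup>2 \<le> (L / mm)\<^sup>2" by (intro power_mono) auto
    then show ?thesis by (simp add: F0_def del: abs_divide)
  qed
  have S02: "{0..2*pi} \<in> sets lebesgue"
    using lmeasurable_cbox[of 0 "2*pi"] by (metis cbox_interval fmeasurableD)
  have F0int: "F0 integrable_on {0..2*pi}"
    by (rule measurable_bounded_by_integrable_imp_integrable[OF F0m integrable_const_ivl F0b S02])
  have FF0: "F \<theta> = F0 \<theta>" if "\<theta> \<in> {0..2*pi} - N1" for \<theta>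
    using derivln[of \<theta>] that by (simp add: F_def F0_def)
  have Fint: "F integrable_on {0..2*pi}"
    by (rule integrable_spike[OF F0int N1 FF0])
  have Fnn: "0 \<le> F \<theta>" for \<theta> by (simp add: F_def)
  define IF where "IF = integral {0..2*pi} F"
  have IFnn: "0 \<le> IF" unfolding IF_def by (rule integral_nonneg[OF Fint]) (simp add: Fnn)
  have "integral {0..2*pi} (a0 (stretch_map R)) = integral {0..2*pi} (\<lambda>\<theta>. 1 + F \<theta>)"
    by (rule integral_spike[OF negB]) (simp add: a0eq F_def)
  also have "\<dots> = integral {0..2*pi} (\<lambda>\<theta>. 1) + IF"
    unfolding IF_def by (rule integral_add[OF integrable_const_ivl Fint])
  also have "\<dots> = 2*pi + IF" using pi_gt_zero by simp
  finally have ia0: "integral {0..2*pi} (a0 (stretch_map R)) = 2*pi + IF" .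
  have g0eq: "g0 (stretch_map R) = 1 + IF / (2*pi)"
    unfolding g0_def ia0 using pi_gt_zero by (simp add: add_divide_distrib)
  have C1: "g0 (stretch_map R) = 1 + integral {0..2*pi} (\<lambda>\<theta>. (deriv (\<lambda>t. ln (R t)) \<theta>)\<^sup>2) / (2*pi)"
    unfolding g0eq IF_def F_def ..
  have C3: "g0 (stretch_map R) \<ge> 1" unfolding g0eq using IFnn pi_gt_zero by simp
  define P where "P \<theta> = sqrt ((R \<theta>)\<^sup>2 + (deriv R \<theta>)\<^sup>2) * Q \<theta>" for \<theta>
  have inum: "integral {0..2*pi} (\<lambda>\<theta>. a1 (stretch_map R) \<theta> * (pw q (stretch_map R) \<theta>)\<^sup>2)
      = integral {0..2*pi} (\<lambda>\<theta>. ((R \<theta>)\<^sup>2 + (deriv R \<theta>)\<^sup>2) * (Q \<theta>)\<^sup>2)"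
  proof (rule integral_spike[OF negB])
    fix \<theta> assume th: "\<theta> \<in> {0..2*pi} - B"
    have "0 \<le> (R \<theta>)\<^sup>2 + (deriv R \<theta>)\<^sup>2" by simp
    then show "((R \<theta>)\<^sup>2 + (deriv R \<theta>)\<^sup>2) * (Q \<theta>)\<^sup>2 = a1 (stretch_map R) \<theta> * (pw q (stretch_map R) \<theta>)\<^sup>2"
      unfolding a1eq[OF th] pweq[OF nN1[OF th]] by (simp add: power_mult_distrib)
  qed
  have iden: "integral {0..2*pi} (pw q (stretch_map R)) = integral {0..2*pi} P"
  proof (rule integral_spike[OF negB])
    fix \<theta> assume th: "\<theta> \<in> {0..2*pi} - B"
    show "P \<theta> = pw q (stretch_map R) \<theta>" unfolding pweq[OF nN1[OF th]] P_def by simp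
  qed
  have numP: "(\<lambda>\<theta>. ((R \<theta>)\<^sup>2 + (deriv R \<theta>)\<^sup>2) * (Q \<theta>)\<^sup>2) = (\<lambda>\<theta>. (P \<theta>)\<^sup>2)"
    by (auto simp: P_def power_mult_distrib)
  have g1eq: "g1 q (stretch_map R) = (integral {0..2*pi} (\<lambda>\<theta>. (P \<theta>)\<^sup>2) / (2*pi)) / (integral {0..2*pi} P / (2*pi))\<^sup>2"
    unfolding g1_def inum iden numP ..
  have C2: "g1 q (stretch_map R) =
           (integral {0..2*pi} (\<lambda>\<theta>. ((R \<theta>)\<^sup>2 + (deriv R \<theta>)\<^sup>2) * (q (complex_of_real (R \<theta>) * cis \<theta>))\<^sup>2) / (2*pi))
         / (integral {0..2*pi} (\<lambda>\<theta>. sqrt ((R \<theta>)\<^sup>2 + (deriv R \<theta>)\<^sup>2) * q (complex_of_real (R \<theta>) * cis \<theta>)) / (2*pi))\<^sup>2"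
    unfolding g1_def inum iden P_def Q_def ..
  obtain Bq where Bq: "AE \<theta> in lebesgue. Q \<theta> \<le> Bq" using q_bounded unfolding Q_def by blast
  have "AE \<theta> in lebesgue. 0 < Q \<theta> \<and> Q \<theta> \<le> Bq"
    using Bq q_pos unfolding Q_def by eventually_elim auto
  then obtain N3 where N3: "{\<theta> \<in> space lebesgue. \<not> (0 < Q \<theta> \<and> Q \<theta> \<le> Bq)} \<subseteq> N3"
    "emeasure lebesgue N3 = 0" "N3 \<in> sets lebesgue"
    by (rule AE_E)
  have negN3: "negligible N3" using N3 by (simp add: negligible_iff_null_sets null_sets_def)
  have Qgood: "0 < Q \<theta> \<and> Q \<theta> \<le> Bq" if "\<theta> \<notin> N3" for \<theta> using N3(1) that by auto
  define Qc where "Qc \<theta> = max 0 (min Bq (Q \<theta>))" for \<theta>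
  define P0 where "P0 \<theta> = sqrt ((R \<theta>)\<^sup>2 + (kR \<theta>)\<^sup>2) * Qc \<theta>" for \<theta>
  have Qm: "Q \<in> borel_measurable (lebesgue_on {0..2*pi})"
    using q_meas unfolding Q_def[abs_def] by (rule lebesgue_lebesgue_on)
  have Rm: "R \<in> borel_measurable (lebesgue_on {0..2*pi})" using Rb by (rule borel_lebesgue_on)
  have kRm': "kR \<in> borel_measurable (lebesgue_on {0..2*pi})" using kRm by (rule borel_lebesgue_on)
  have P0m: "P0 \<in> borel_measurable (lebesgue_on {0..2*pi})"
    unfolding P0_def Qc_def using Qm Rm kRm' by measurable
  have P02m: "(\<lambda>\<theta>. (P0 \<theta>)\<^sup>2) \<in> borel_measurable (lebesgue_on {0..2*pi})"
    using P0m by measurable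
  define K where "K = sqrt (MM\<^sup>2 + L\<^sup>2) * max 0 Bq"
  have P0b: "norm (P0 \<theta>) \<le> K" if "\<theta> \<in> {0..2*pi}" for \<theta>
  proof -
    have "mm \<le> R \<theta>" "R \<theta> \<le> MM" using xm(2)[OF that] xM(2)[OF that] by (simp_all add: mm_def MM_def)
    then have "(R \<theta>)\<^sup>2 \<le> MM\<^sup>2" using mm by (intro power_mono) auto
    moreover have "(kR \<theta>)\<^sup>2 \<le> L\<^sup>2" using kRb[of \<theta>] by (metis abs_le_square_iff abs_of_nonneg L0)
    ultimately have s: "sqrt ((R \<theta>)\<^sup>2 + (kR \<theta>)\<^sup>2) \<le> sqrt (MM\<^sup>2 + L\<^sup>2)" by simp
    have q: "0 \<le> Qc \<theta>" "Qc \<theta> \<le> max 0 Bq" by (auto simp: Qc_def)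
    have "norm (P0 \<theta>) = sqrt ((R \<theta>)\<^sup>2 + (kR \<theta>)\<^sup>2) * Qc \<theta>" using q by (simp add: P0_def)
    also have "\<dots> \<le> K" unfolding K_def using s q by (intro mult_mono) auto
    finally show ?thesis .
  qed
  have P02b: "norm ((P0 \<theta>)\<^sup>2) \<le> K\<^sup>2" if "\<theta> \<in> {0..2*pi}" for \<theta>
  proof -
    have "\<bar>P0 \<theta>\<bar> \<le> K" using P0b[OF that] by simp
    then have "\<bar>P0 \<theta>\<bar>\<^sup>2 \<le> K\<^sup>2" by (intro power_mono) auto
    then show ?thesis by simp
  qed
  have P0int: "P0 integrable_on {0..2*pi}"
    by (rule measurable_bounded_by_integrable_imp_integrable[OF P0m integrable_const_ivl P0b S02])
  have P02int: "(\<lambda>\<theta>. (P0 \<theta>)\<^sup>2) integrable_on {0..2*pi}"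
    by (rule measurable_bounded_by_integrable_imp_integrable[OF P02m integrable_const_ivl P02b S02])
  have negN13: "negligible (N1 \<union> N3)" using N1 negN3 by (rule negligible_Un)
  have PP0: "P \<theta> = P0 \<theta>" if "\<theta> \<in> {0..2*pi} - (N1 \<union> N3)" for \<theta>
  proof -
    have "\<theta> \<notin> N1" "\<theta> \<notin> N3" using that by auto
    then have "Qc \<theta> = Q \<theta>" using Qgood by (auto simp: Qc_def)
    then show ?thesis using derivR[OF \<open>\<theta> \<notin> N1\<close>] by (simp add: P_def P0_def)
  qed
  have Pint: "P integrable_on {0..2*pi}" by (rule integrable_spike[OF P0int negN13 PP0])
  have P2int: "(\<lambda>\<theta>. (P \<theta>)\<^sup>2) integrable_on {0..2*pi}"
    by (rule integrable_spike[OF P02int negN13]) (simp add: PP0)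
  have iPP0: "integral {0..2*pi} P0 = integral {0..2*pi} P"
    by (rule integral_spike[OF negN13 PP0])
  have P0pos: "integral {0..2*pi} P0 > 0"
  proof (rule integral_pos_ae[OF P0int _ negN3])
    show "0 < 2*pi" using pi_gt_zero by simp
    show "0 \<le> P0 x" for x by (simp add: P0_def Qc_def)
    fix x assume "x \<in> {0..2*pi} - N3"
    then have "0 < Q x" "Q x \<le> Bq" using Qgood by auto
    then have "Qc x = Q x" "0 < Q x" by (auto simp: Qc_def)
    moreover have "0 < sqrt ((R x)\<^sup>2 + (kR x)\<^sup>2)" using R_pos[rule_format, of x]
      by (simp add: add_pos_nonneg)
    ultimately show "0 < P0 x" by (simp add: P0_def)
  qed
  define I1 where "I1 = integral {0..2*pi} P"
  define I2 where "I2 = integral {0..2*pi} (\<lambda>\<theta>. (P \<theta>)\<^sup>2)"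
  have I1pos: "I1 > 0" using P0pos iPP0 by (simp add: I1_def)
  have cs: "I1\<^sup>2 \<le> (2*pi - 0) * I2"
    unfolding I1_def I2_def by (rule cauchy_schwarz_int[OF Pint P2int]) (use pi_gt_zero in simp)
  have C4: "g1 q (stretch_map R) \<ge> 1"
  proof -
    have "g1 q (stretch_map R) = (I2 / (2*pi)) / (I1 / (2*pi))\<^sup>2"
      unfolding g1eq I1_def I2_def ..
    also have "\<dots> = (2*pi) * I2 / I1\<^sup>2" using pi_gt_zero I1pos by (simp add: field_simps power2_eq_square)
    finally show ?thesis using cs I1pos by (simp add: le_divide_eq)
  qed
  have C5: "g0 (stretch_map R) = 1 \<longleftrightarrow> (\<exists>c. \<forall>\<theta>. R \<theta> = c)"
  proof
    assume "\<exists>c. \<forall>\<theta>. R \<theta> = c"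
    then obtain c where c: "\<And>\<theta>. R \<theta> = c" by blast
    have "(\<lambda>t. ln (R t)) = (\<lambda>t. ln c)" by (simp add: c)
    then have "F = (\<lambda>_. 0)" by (simp add: F_def fun_eq_iff)
    then have "IF = 0" by (simp add: IF_def)
    then show "g0 (stretch_map R) = 1" by (simp add: g0eq)
  next
    assume "g0 (stretch_map R) = 1"
    then have "IF = 0" using g0eq pi_gt_zero by simp
    then obtain N' where negN': "negligible N'" and N': "\<And>x. x \<in> {0..2*pi} - N' \<Longrightarrow> F x = 0"
      using integral_zero_ae[OF Fint Fnn] unfolding IF_def by blast
    have negN1': "negligible (N1 \<union> N')" using N1 negN' by (rule negligible_Un)
    have kz: "kR x = 0" if "x \<in> {0..2*pi} - (N1 \<union> N')" for x
    proof -
      have "x \<notin> N1" using that by auto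
      have "F x = 0" using N' that by auto
      then have "(kR x / R x)\<^sup>2 = 0" using derivln[OF \<open>x \<notin> N1\<close>] by (simp add: F_def)
      then show ?thesis using R_pos[rule_format, of x] by simp
    qed
    have R0: "R x = R 0" if "x \<in> {0..2*pi}" for x
    proof -
      have i1: "(kR has_integral (R x - R 0)) {0..x}" using kRi[of 0 x] that by simp
      have z: "((\<lambda>_. 0::real) has_integral 0) {0..x}" by simp
      have i2: "(kR has_integral 0) {0..x}"
      proof (rule has_integral_spike[OF negN1' _ z])
        fix y assume "y \<in> {0..x} - (N1 \<union> N')"
        then show "kR y = 0" using that kz by auto
      qed
      have "R x - R 0 = 0" using has_integral_unique[OF i1 i2] .
      then show ?thesis by simp
    qed
    show "\<exists>c. \<forall>\<theta>. R \<theta> = c"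
    proof (intro exI allI)
      fix x :: real
      obtain n :: int where n: "x + 2*pi * of_int n \<in> {0..2*pi}" by (rule reduce_2pi)
      have "R x = R (x + 2*pi * of_int n)" by (rule periodic_int[OF per, symmetric])
      also have "\<dots> = R 0" by (rule R0[OF n])
      finally show "R x = R 0" .
    qed
  qed
  show ?thesis using C1 C2 C3 C4 C5 by blast
qed

end
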